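(* Let $W$ be any BISO channel and let $\eta=\eta_{KL}(W)$. Then $$\mathrm{BEC}(1-\eta)\succeq_{\mathrm{l.n.}} W\succeq_{\mathrm{l.n.}}\mathrm{BSC}\Big(\tfrac{1-\sqrt{\eta}}{2}\Big).$$ (Note $\eta_{KL}(\mathrm{BEC}(1-\eta))=\eta_{KL}(\mathrm{BSC}(\frac{1-\sqrt\eta}{2}))=\eta$, so among BISO channels with a fixed KL contraction coefficient, the BEC is maximal and the BSC minimal in the less noisy order.)
   Context: A binary-input symmetric-output (BISO) channel is a channel $P_{Y|X}$ with input alphabet $\{0,1\}$ and finite output alphabet $\mathcal Y=\{0,\pm1,\dots,\pm l\}$ for some integer $l\ge 1$ (some transition probabilities may be zero), such that $P_{Y|X}(y|0)=P_{Y|X}(-y|1)=:p_y$ for all $y\in\mathcal Y$. $\mathrm{BSC}(p)$ is the binary symmetric channel on $\{0,1\}$ with crossover probability $p$; $\mathrm{BEC}(\varepsilon)$ is the binary erasure channel with input $\{0,1\}$, output $\{0,e,1\}$, mapping input $x$ to $x$ with probability $1-\varepsilon$ and to the erasure symbol $e$ with probability $\varepsilon$. The KL contraction coefficient is $\eta_{KL}(P)=\sup_{P_X,Q_X}\frac{D(P\circ P_X\|P\circ Q_X)}{D(P_X\|Q_X)}$ (supremum over input distributions with $0<D(P_X\|Q_X)<\infty$, $P\circ P_X$ the output distribution). For channels $P_{Y|X},Q_{Y'|X}$ with the same input alphabet, $P\succeq_{\mathrm{l.n.}}Q$ (less noisy) means: for every finite-alphabet random variable $U$ and every joint distribution $P_{UX}$,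 with $U-X-Y$ and $U-X-Y'$ Markov chains, $I(U:Y)\ge I(U:Y')$. *)

theory Defs
  imports Complex_Main
begin

text \<open>Binary input alphabet: False = 0, True = 1. A channel is a transition
 kernel ch x y = P(Y = y | X = x) together with an explicit finite output alphabet.\<close>

definition is_channel :: "(bool \<Rightarrow> 'y \<Rightarrow> real) \<Rightarrow> 'y set \<Rightarrow> bool" where
  "is_channel ch Y \<longleftrightarrow> finite Y \<and> (\<forall>x y. ch x y \<ge> 0) \<and> (\<forall>x. \<forall>y. y \<notin> Y \<longrightarrow> ch x y = 0)
     \<and> (\<forall>x. (\<Sum>y\<in>Y. ch x y) = 1)"

text \<open>BISO channel with output alphabet {-l..l} and parameters p_y = P(y|0) = P(-y|1).\<close>
definition biso :: "(int \<Rightarrow> real) \<Rightarrow> bool \<Rightarrow> int \<Rightarrow> real" where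
  "biso p x y = (if x then p (- y) else p y)"

definition is_biso_param :: "int \<Rightarrow> (int \<Rightarrow> real) \<Rightarrow> bool" where
  "is_biso_param l p \<longleftrightarrow> l \<ge> 1 \<and> (\<forall>y\<in>{-l..l}. p y \<ge> 0) \<and> (\<forall>y. y \<notin> {-l..l} \<longrightarrow> p y = 0)
     \<and> (\<Sum>y\<in>{-l..l}. p y) = 1"

definition BSC :: "real \<Rightarrow> bool \<Rightarrow> bool \<Rightarrow> real" where
  "BSC q x y = (if y = x then 1 - q else q)"

text \<open>Erasure symbol e is None.\<close>
definition BEC :: "real \<Rightarrow> bool \<Rightarrow> bool option \<Rightarrow> real" where
  "BEC \<epsilon> x y = (case y of None \<Rightarrow> \<epsilon> | Some b \<Rightarrow> (if b = x then 1 - \<epsilon> else 0))"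

definition BEC_out :: "bool option set" where
  "BEC_out = {None, Some False, Some True}"

definition is_dist2 :: "(bool \<Rightarrow> real) \<Rightarrow> bool" where
  "is_dist2 P \<longleftrightarrow> (\<forall>x. P x \<ge> 0) \<and> P False + P True = 1"

text \<open>KL divergence (natural log, 0 log 0 = 0) on a finite set; it is finite
 exactly when P is absolutely continuous w.r.t. Q, which is imposed separately.\<close>
definition KL :: "'a set \<Rightarrow> ('a \<Rightarrow> real) \<Rightarrow> ('a \<Rightarrow> real) \<Rightarrow> real" where
  "KL A P Q = (\<Sum>a\<in>A. if P a = 0 then 0 else P a * ln (P a / Q a))"

definition abs_cont :: "'a set \<Rightarrow> ('a \<Rightarrow> real) \<Rightarrow> ('a \<Rightarrow> real) \<Rightarrow> bool" where
  "abs_cont A P Q \<longleftrightarrow> (\<forall>a\<in>A. Q a = 0 \<longrightarrow> P a = 0)"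

definition out_dist :: "(bool \<Rightarrow> 'y \<Rightarrow> real) \<Rightarrow> (bool \<Rightarrow> real) \<Rightarrow> 'y \<Rightarrow> real" where
  "out_dist ch P y = (\<Sum>x\<in>UNIV. P x * ch x y)"

definition eta_KL :: "(bool \<Rightarrow> 'y \<Rightarrow> real) \<Rightarrow> 'y set \<Rightarrow> real" where
  "eta_KL ch Y = Sup {KL Y (out_dist ch P) (out_dist ch Q) / KL UNIV P Q | P Q.
      is_dist2 P \<and> is_dist2 Q \<and> abs_cont UNIV P Q \<and> 0 < KL UNIV P Q}"

text \<open>Mutual information I(U;Y) for U - X - Y, where U takes values in {..<k}
 and PUX is the joint distribution of (U,X).\<close>
definition mutual_info :: "(bool \<Rightarrow> 'y \<Rightarrow> real) \<Rightarrow> 'y set \<Rightarrow> nat \<Rightarrow> (nat \<Rightarrow> bool \<Rightarrow> real) \<Rightarrow> real" where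
  "mutual_info ch Y k PUX =
    (let PUY = (\<lambda>u y. \<Sum>x\<in>UNIV. PUX u x * ch x y);
         PU = (\<lambda>u. \<Sum>x\<in>UNIV. PUX u x);
         PY = (\<lambda>y. \<Sum>u<k. PUY u y)
     in \<Sum>u<k. \<Sum>y\<in>Y. if PUY u y = 0 then 0 else PUY u y * ln (PUY u y / (PU u * PY y)))"

definition is_joint :: "nat \<Rightarrow> (nat \<Rightarrow> bool \<Rightarrow> real) \<Rightarrow> bool" where
  "is_joint k PUX \<longleftrightarrow> (\<forall>u x. PUX u x \<ge> 0) \<and> (\<Sum>u<k. \<Sum>x\<in>UNIV. PUX u x) = 1"

text \<open>Less noisy: P \<succeq>_ln Q. Every finite-alphabet U is, up to relabelling, valued in some {..<k}.\<close>
definition less_noisy :: "(bool \<Rightarrow> 'y \<Rightarrow> real) \<Rightarrow> 'y set \<Rightarrow> (bool \<Rightarrow> 'z \<Rightarrow> real) \<Rightarrow> 'z set \<Rightarrow> bool" where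
  "less_noisy P Y Q Z \<longleftrightarrow> (\<forall>k PUX. is_joint k PUX \<longrightarrow> mutual_info P Y k PUX \<ge> mutual_info Q Z k PUX)"

end

theory Submission imports Defs "HOL-Analysis.Analysis" "HOL-Analysis.Harmonic_Numbers" begin


definition gterm :: "real \<Rightarrow> nat \<Rightarrow> real" where
  "gterm t m = t^(2*m+1)/real (2*m+1) - t^(2*m+2)/real (2*m+2)"

lemma lnG_int:
  assumes "\<bar>t\<bar> < 1"
  shows "gterm t sums ln (1 + t)"
proof -
  have s: "(\<lambda>n. - ((-t)^n) / of_nat n) sums ln (1 + t)" using ln_series'[OF assms] .
  have s1: "(\<lambda>n. - ((-t)^(Suc n)) / of_nat (Suc n)) sums ln (1 + t)"
    using sums_Suc_iff[of "\<lambda>n. - ((-t)^n) / of_nat n"] s by simp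
  note s2 = sums_group[OF s1, of 2]
  have eq: "(\<lambda>n. \<Sum>i\<in>{n * 2..<n * 2 + 2}. - ((- t) ^ Suc i) / real (Suc i)) = gterm t"
  proof
    fix n
    have "{n*2..<n*2+2} = {2*n, Suc (2*n)}" by auto
    then show "(\<Sum>i\<in>{n * 2..<n * 2 + 2}. - ((- t) ^ Suc i) / real (Suc i)) = gterm t n"
      by (simp add: gterm_def power_minus' field_simps)
  qed
  show ?thesis using s2 unfolding eq by simp
qed

lemma lnG_1: "gterm 1 sums ln 2"
proof -
  have "gterm 1 = (\<lambda>k. inverse (real_of_nat (2*k+1)) - inverse (real_of_nat (2*k+2)))"
    by (auto simp: gterm_def divide_inverse)
  then show ?thesis using alternating_harmonic_series_sums' by simp
qed

lemma inv_key: "(a::real) > 0 \<Longrightarrow> inverse (a*(a+1)) = inverse a - inverse (a+1)"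
proof -
  assume a: "a > 0"
  then have "a \<noteq> 0" "a + 1 \<noteq> 0" by auto
  then show ?thesis by (simp add: field_simps)
qed
lemma key: "inverse (real (2*m+1) * real (2*m+2)) = inverse (real (2*m+1)) - inverse (real (2*m+2))"
proof -
  have "real (2*m+2) = real (2*m+1) + 1" by simp
  then show ?thesis using inv_key[of "real (2*m+1)"] by simp
qed

definition dd :: "real \<Rightarrow> real \<Rightarrow> real" where
  "dd x y = (1+x)/2 * ln ((1+x)/(1+y)) + (1-x)/2 * ln ((1-x)/(1-y))"

definition aa :: "nat \<Rightarrow> real \<Rightarrow> real \<Rightarrow> real" where
  "aa m x y = x^(2*m+2)/(real (2*m+1) * real (2*m+2)) + y^(2*m+2)/real (2*m+2) - x*y^(2*m+1)/real (2*m+1)"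

lemma aa_alt: "aa m x y = x*x^(2*m+1)/(real (2*m+1) * real (2*m+2)) + y*y^(2*m+1)/real (2*m+2) - x*y^(2*m+1)/real (2*m+1)"
  unfolding aa_def by simp

lemma aa_inv: "aa m x y = x*x^(2*m+1)*(inverse (real (2*m+1)) - inverse (real (2*m+2))) + y*y^(2*m+1)*inverse (real (2*m+2)) - x*y^(2*m+1)*inverse (real (2*m+1))"
proof -
  define A B where "A = real (2*m+1)" and "B = real (2*m+2)"
  have k: "inverse (A*B) = inverse A - inverse B" unfolding A_def B_def by (rule key)
  have "aa m x y = x*x^(2*m+1)*inverse (A*B) + y*y^(2*m+1)*inverse B - x*y^(2*m+1)*inverse A"
    unfolding aa_def A_def[symmetric] B_def[symmetric] by (simp add: divide_inverse)
  note h2 = this[unfolded k]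
  show ?thesis using h2 unfolding A_def B_def .
qed

lemma gterm_neg: "gterm (-t) m = -(t^(2*m+1))/real (2*m+1) - t*(t^(2*m+1))/real (2*m+2)"
  by (simp add: gterm_def power_minus')

lemma gterm_alt: "gterm t m = t^(2*m+1)*inverse (real (2*m+1)) - t*(t^(2*m+1))*inverse (real (2*m+2))"
  by (simp add: gterm_def divide_inverse)

lemma gterm_neg_inv: "gterm (-t) m = -(t^(2*m+1))*inverse (real (2*m+1)) - t*(t^(2*m+1))*inverse (real (2*m+2))"
  unfolding gterm_neg by (simp add: divide_inverse)

lemma dd_sums:
  assumes x: "\<bar>x\<bar> \<le> 1" and y: "\<bar>y\<bar> < 1"
  shows "(\<lambda>m. aa m x y) sums dd x y"
proof -
  have gy: "gterm y sums ln (1 + y)" using lnG_int y by simp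
  have gny: "gterm (-y) sums ln (1 + - y)" using lnG_int[of "-y"] y by simp
  have py: "1 + y > 0" "1 - y > 0" using y by auto
  consider "\<bar>x\<bar> < 1" | "x = 1" | "x = -1" using x by linarith
  then show ?thesis
  proof cases
    case 1
    have gx: "gterm x sums ln (1 + x)" using lnG_int 1 by simp
    have gnx: "gterm (-x) sums ln (1 + - x)" using lnG_int[of "-x"] 1 by simp
    have px: "1 + x > 0" "1 - x > 0" using 1 by auto
    have S: "(\<lambda>m. (1+x)/2 * gterm x m + (1-x)/2 * gterm (-x) m - ((1+x)/2 * gterm y m + (1-x)/2 * gterm (-y) m))
       sums ((1+x)/2 * ln (1+x) + (1-x)/2 * ln (1 + - x) - ((1+x)/2 * ln (1+y) + (1-x)/2 * ln (1 + - y)))"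
      by (intro sums_diff sums_add sums_mult gx gnx gy gny)
    have e1: "dd x y = (1+x)/2 * ln (1+x) + (1-x)/2 * ln (1 + - x) - ((1+x)/2 * ln (1+y) + (1-x)/2 * ln (1 + - y))"
      using px py by (simp add: dd_def ln_div algebra_simps)
    have e2: "(1+x)/2 * gterm x m + (1-x)/2 * gterm (-x) m - ((1+x)/2 * gterm y m + (1-x)/2 * gterm (-y) m) = aa m x y" for m
    proof -
      have aux: "\<And>X Y iA iB. (1+x)/2 * (X*iA - x*X*iB) + (1-x)/2*(-X*iA - x*X*iB) - ((1+x)/2*(Y*iA - y*Y*iB) + (1-x)/2*(-Y*iA - y*Y*iB)) = x*X*(iA - iB) + y*Y*iB - x*Y*iA"
        by (simp add: field_simps)
      show ?thesis unfolding gterm_neg_inv unfolding gterm_alt aa_inv by (rule aux)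
    qed
    show ?thesis using S unfolding e1 e2 .
  next
    case 2
    have S: "(\<lambda>m. gterm 1 m - gterm y m) sums (ln 2 - ln (1 + y))"
      by (intro sums_diff lnG_1 gy)
    have e1: "dd x y = ln 2 - ln (1 + y)" using 2 py by (simp add: dd_def ln_div)
    have e2: "gterm 1 m - gterm y m = aa m x y" for m
      using 2 by (simp add: gterm_def aa_def field_simps)
    show ?thesis using S unfolding e1 e2 .
  next
    case 3
    have S: "(\<lambda>m. gterm 1 m - gterm (-y) m) sums (ln 2 - ln (1 + - y))"
      by (intro sums_diff lnG_1 gny)
    have e1: "dd x y = ln 2 - ln (1 + - y)" using 3 py by (simp add: dd_def ln_div)
    have e2: "gterm 1 m - gterm (-y) m = aa m x y" for m
      using 3 unfolding gterm_neg by (simp add: gterm_def aa_def field_simps)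
    show ?thesis using S unfolding e1 e2 .
  qed
qed

lemma tangent_even:
  fixes x y :: real
  assumes "even k"
  shows "y^k + real k * y^(k-1) * (x - y) \<le> x^k"
proof (cases "y = 0")
  case True
  show ?thesis
  proof (cases k)
    case 0 then show ?thesis by simp
  next
    case (Suc j)
    then have "j > 0" using assms by (cases j) auto
    then have "y^k + real k * y^(k-1) * (x - y) = 0" using True Suc by simp
    also have "0 \<le> x^k" using assms by (simp add: zero_le_even_power)
    finally show ?thesis .
  qed
next
  case False
  have yk: "y^k > 0" using False assms by (simp add: zero_less_power_eq)
  have B: "1 + real k * (x/y - 1) \<le> (1 + (x/y - 1))^k"
    using Bernoulli_inequality_even[OF assms] by blast
  hence "y^k * (1 + real k * (x/y - 1)) \<le> y^k * (x/y)^k"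
    using yk by (intro mult_left_mono) auto
  also have "\<dots> = x^k" using False by (simp add: power_divide)
  also have "y^k * (1 + real k * (x/y - 1)) = y^k + real k * y^(k-1) * (x - y)"
  proof (cases k)
    case 0 then show ?thesis by simp
  next
    case (Suc j)
    then show ?thesis using False by (simp add: field_simps)
  qed
  finally show ?thesis .
qed

lemma aa_nonneg: "aa m x y \<ge> 0"
proof -
  have T: "y^(2*m+2) + real (2*m+2) * y^(2*m+2-1) * (x - y) \<le> x^(2*m+2)"
    by (rule tangent_even) simp
  have "2*m+2-1 = 2*m+1" by simp
  then have T': "y^(2*m+2) + real (2*m+2) * y^(2*m+1) * (x - y) \<le> x^(2*m+2)" using T by simp
  have yy: "y^(2*m+2) = y * y^(2*m+1)" by simp
  have "0 \<le> x^(2*m+2) + real (2*m+1) * y^(2*m+2) - real (2*m+2) * x * y^(2*m+1)"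
    using T' unfolding yy by (simp add: algebra_simps)
  hence "0 \<le> (x^(2*m+2) + real (2*m+1) * y^(2*m+2) - real (2*m+2) * x * y^(2*m+1)) / (real (2*m+1) * real (2*m+2))"
    by simp
  also have "\<dots> = aa m x y"
  proof -
    define A B where "A = real (2*m+1)" and "B = real (2*m+2)"
    have "A > 0" "B > 0" unfolding A_def B_def by auto
    then have "(x^(2*m+2) + A * y^(2*m+2) - B * x * y^(2*m+1)) / (A * B) = x^(2*m+2)/(A * B) + y^(2*m+2)/B - x*y^(2*m+1)/A"
      by (simp add: field_simps)
    then show ?thesis unfolding aa_def A_def B_def .
  qed
  finally show ?thesis .
qed

lemma aa_scale: "aa m (c*x) (c*y) = (c^2)^(m+1) * aa m x y"
proof -
  have "(c^2)^(m+1) = c^(2*(m+1))" by (rule power_mult[symmetric])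
  also have "\<dots> = c * c^(2*m+1)" by simp
  finally have e: "(c^2)^(m+1) = c * c^(2*m+1)" .
  show ?thesis unfolding aa_inv e by (simp add: power_mult_distrib algebra_simps)
qed

lemma aa_same: "aa m x x = 0"
  unfolding aa_inv by (simp add: algebra_simps)

lemma dd_scaled_sums:
  assumes x: "\<bar>x\<bar> \<le> 1" and y: "\<bar>y\<bar> < 1" and c: "\<bar>c\<bar> \<le> 1"
  shows "(\<lambda>m. (c^2)^(m+1) * aa m x y) sums dd (c*x) (c*y)"
proof -
  have "\<bar>c*x\<bar> \<le> 1" using x c by (simp add: abs_mult mult_le_one)
  moreover have "\<bar>c*y\<bar> < 1"
  proof -
    have "\<bar>c*y\<bar> = \<bar>c\<bar> * \<bar>y\<bar>" by (simp add: abs_mult)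
    also have "\<dots> \<le> \<bar>y\<bar>" using c by (simp add: mult_left_le_one_le)
    finally show ?thesis using y by linarith
  qed
  ultimately have "(\<lambda>m. aa m (c*x) (c*y)) sums dd (c*x) (c*y)" by (rule dd_sums)
  then show ?thesis unfolding aa_scale .
qed

lemma dd_nonneg:
  assumes x: "\<bar>x\<bar> \<le> 1" and y: "\<bar>y\<bar> < 1"
  shows "dd x y \<ge> 0"
proof -
  have "(\<lambda>m. aa m x y) sums dd x y" using dd_sums x y by blast
  then show ?thesis using sums_le[of "\<lambda>_. 0" "\<lambda>m. aa m x y" 0] aa_nonneg by auto
qed

lemma dd_same: "dd z z = 0"
  unfolding dd_def by (cases "1 + z = 0"; cases "1 - z = 0") auto

lemma jensen_sub:
  fixes w t :: "'a \<Rightarrow> real"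
  assumes fin: "finite J" and w: "\<And>j. j \<in> J \<Longrightarrow> w j \<ge> 0" and W1: "(\<Sum>j\<in>J. w j) \<le> 1"
    and t: "\<And>j. j \<in> J \<Longrightarrow> t j \<ge> 0"
  shows "(\<Sum>j\<in>J. w j * t j)^(Suc n) \<le> (\<Sum>j\<in>J. w j * t j^(Suc n))"
proof -
  define W where "W = (\<Sum>j\<in>J. w j)"
  have W0: "W \<ge> 0" unfolding W_def using w by (simp add: sum_nonneg)
  show ?thesis
  proof (cases "W = 0")
    case True
    then have "\<forall>j\<in>J. w j = 0" using sum_nonneg_eq_0_iff[OF fin] w unfolding W_def by blast
    then show ?thesis by simp
  next
    case False
    then have Wp: "W > 0" using W0 by simp
    have Jne: "J \<noteq> {}" using False unfolding W_def by auto
    have cvx: "convex_on {0..} (\<lambda>x::real. x^(Suc n))"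
    proof (cases "even (Suc n)")
      case True then show ?thesis using convex_power_even convex_on_subset by blast
    next
      case False then show ?thesis using convex_power_odd by blast
    qed
    have J: "(\<lambda>x. x^(Suc n)) (\<Sum>j\<in>J. (w j / W) *\<^sub>R t j) \<le> (\<Sum>j\<in>J. (w j / W) * (\<lambda>x. x^(Suc n)) (t j))"
      apply (rule convex_on_sum[OF fin Jne cvx])
      using w t Wp by (auto simp: sum_divide_distrib[symmetric] W_def)
    have e1: "(\<Sum>j\<in>J. (w j / W) *\<^sub>R t j) = (\<Sum>j\<in>J. w j * t j) / W"
      by (simp add: sum_divide_distrib)
    have e2: "(\<Sum>j\<in>J. (w j / W) * t j^(Suc n)) = (\<Sum>j\<in>J. w j * t j^(Suc n)) / W"
      by (simp add: sum_divide_distrib)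
    have "((\<Sum>j\<in>J. w j * t j) / W)^(Suc n) \<le> (\<Sum>j\<in>J. w j * t j^(Suc n)) / W"
      using J unfolding e1 e2 by simp
    hence "(\<Sum>j\<in>J. w j * t j)^(Suc n) \<le> W^n * (\<Sum>j\<in>J. w j * t j^(Suc n))"
      using Wp by (simp add: power_divide field_simps)
    also have "\<dots> \<le> 1 * (\<Sum>j\<in>J. w j * t j^(Suc n))"
      apply (rule mult_right_mono)
      using W0 W1 unfolding W_def apply (simp add: power_le_one)
      using w t by (simp add: sum_nonneg)
    finally show ?thesis by simp
  qed
qed



lemma pair_KL:
  fixes a b x y :: real
  assumes a: "a \<ge> 0" and b: "b \<ge> 0"
  defines "A \<equiv> (1+x)/2*a + (1-x)/2*b" and "B \<equiv> (1+y)/2*a + (1-y)/2*b"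
    and "A' \<equiv> (1+x)/2*b + (1-x)/2*a" and "B' \<equiv> (1+y)/2*b + (1-y)/2*a"
  shows "(if A = 0 then 0 else A * ln (A/B)) + (if A' = 0 then 0 else A' * ln (A'/B'))
       = (a+b) * dd ((a-b)/(a+b)*x) ((a-b)/(a+b)*y)"
proof (cases "a + b = 0")
  case True
  then have "a = 0" "b = 0" using a b by auto
  then show ?thesis unfolding A_def A'_def by simp
next
  case False
  define w c where "w = a+b" and "c = (a-b)/(a+b)"
  have wn: "w \<noteq> 0" using False w_def by simp
  have eA: "A = w * ((1 + c*x)/2)" "B = w * ((1 + c*y)/2)"
     "A' = w * ((1 - c*x)/2)" "B' = w * ((1 - c*y)/2)"
    unfolding A_def B_def A'_def B'_def w_def c_def using False by (simp_all add: field_simps)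
  have r: "\<And>s1 s2::real. (w * s1) / (w * s2) = s1 / s2" using wn by simp
  have "(if A = 0 then 0 else A * ln (A/B)) + (if A' = 0 then 0 else A' * ln (A'/B'))
      = A * ln (A/B) + A' * ln (A'/B')" by simp
  also have "\<dots> = w * dd (c*x) (c*y)"
  proof -
    have r2: "\<And>s1 s2::real. (s1 / 2) / (s2 / 2) = s1 / s2" by simp
    show ?thesis unfolding eA r r2 dd_def by (simp add: algebra_simps)
  qed
  finally show ?thesis unfolding w_def c_def .
qed

lemma pair_KL2:
  fixes a b x y :: real
  assumes a: "a \<ge> 0" and b: "b \<ge> 0"
    and "A = (1+x)/2*a + (1-x)/2*b" and "B = (1+y)/2*a + (1-y)/2*b"
    and "A' = (1+x)/2*b + (1-x)/2*a" and "B' = (1+y)/2*b + (1-y)/2*a"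
  shows "(if A = 0 then 0 else A * ln (A/B)) + (if A' = 0 then 0 else A' * ln (A'/B'))
       = (a+b) * dd ((a-b)/(a+b)*x) ((a-b)/(a+b)*y)"
  unfolding assms(3-6) by (rule pair_KL[OF a b])

definition xv :: "(bool \<Rightarrow> real) \<Rightarrow> real" where "xv P = P False - P True"

lemma dist2_F: "is_dist2 P \<Longrightarrow> P False = (1 + xv P)/2"
  unfolding is_dist2_def xv_def by auto
lemma dist2_T: "is_dist2 P \<Longrightarrow> P True = (1 - xv P)/2"
  unfolding is_dist2_def xv_def by auto
lemma dist2_xv: "is_dist2 P \<Longrightarrow> \<bar>xv P\<bar> \<le> 1"
proof -
  assume h: "is_dist2 P"
  then have "P False \<ge> 0" "P True \<ge> 0" "P False + P True = 1" by (auto simp: is_dist2_def)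
  then show ?thesis unfolding xv_def by (simp add: abs_le_iff)
qed

lemma KL_bool:
  assumes P: "is_dist2 P" and Q: "is_dist2 Q"
  shows "KL UNIV P Q = dd (xv P) (xv Q)"
proof -
  have "KL UNIV P Q = (if P False = 0 then 0 else P False * ln (P False / Q False))
     + (if P True = 0 then 0 else P True * ln (P True / Q True))"
    unfolding KL_def UNIV_bool by simp
  also have "\<dots> = (1 + 0) * dd ((1 - 0) / (1 + 0) * xv P) ((1 - 0) / (1 + 0) * xv Q)"
    by (rule pair_KL2) (simp_all add: dist2_F[OF P] dist2_T[OF P] dist2_F[OF Q] dist2_T[OF Q])
  finally show ?thesis by simp
qed

lemma out_biso: "out_dist (biso p) P y = P False * p y + P True * p (-y)"
  unfolding out_dist_def biso_def UNIV_bool by simp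

lemma sum_sym:
  fixes l :: int
  assumes "l \<ge> 0"
  shows "(\<Sum>y\<in>{-l..l}. f y) = f 0 + (\<Sum>j\<in>{1..l}. f j + f (-j))"
proof -
  have U: "{-l..l} = insert 0 ({1..l} \<union> uminus ` {1..l})" using assms
    by (auto simp: image_iff)
  have d: "{1..l} \<inter> uminus ` {1..l} = {}" by auto
  have "(\<Sum>y\<in>{-l..l}. f y) = f 0 + (\<Sum>y\<in>{1..l} \<union> uminus ` {1..l}. f y)"
    unfolding U by (subst sum.insert) auto
  also have "(\<Sum>y\<in>{1..l} \<union> uminus ` {1..l}. f y) = (\<Sum>y\<in>{1..l}. f y) + (\<Sum>y\<in>uminus ` {1..l}. f y)"
    by (rule sum.union_disjoint) (use d in auto)
  also have "(\<Sum>y\<in>uminus ` {1..l}. f y) = (\<Sum>j\<in>{1..l}. f (-j))"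
    by (subst sum.reindex) (auto simp: inj_on_def)
  finally show ?thesis by (simp add: sum.distrib)
qed

definition wj :: "(int \<Rightarrow> real) \<Rightarrow> int \<Rightarrow> real" where "wj p j = p j + p (-j)"
definition cj :: "(int \<Rightarrow> real) \<Rightarrow> int \<Rightarrow> real" where "cj p j = (p j - p (-j)) / (p j + p (-j))"

lemma KL_W:
  assumes bp: "is_biso_param l p" and P: "is_dist2 P" and Q: "is_dist2 Q"
  shows "KL {-l..l} (out_dist (biso p) P) (out_dist (biso p) Q)
       = (\<Sum>j\<in>{1..l}. wj p j * dd (cj p j * xv P) (cj p j * xv Q))"
proof -
  have l: "l \<ge> 0" using bp unfolding is_biso_param_def by simp
  have pn: "\<And>y. y \<in> {-l..l} \<Longrightarrow> p y \<ge> 0" using bp unfolding is_biso_param_def by blast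
  let ?f = "\<lambda>y. if out_dist (biso p) P y = 0 then 0
     else out_dist (biso p) P y * ln (out_dist (biso p) P y / out_dist (biso p) Q y)"
  have f0: "?f 0 = 0"
  proof -
    have "out_dist (biso p) P 0 = (P False + P True) * p 0" "out_dist (biso p) Q 0 = (Q False + Q True) * p 0"
      unfolding out_biso by (auto simp: algebra_simps)
    then have "out_dist (biso p) P 0 = p 0" "out_dist (biso p) Q 0 = p 0"
      using P Q unfolding is_dist2_def by auto
    then show ?thesis by simp
  qed
  have fj: "?f j + ?f (-j) = wj p j * dd (cj p j * xv P) (cj p j * xv Q)" if j: "j \<in> {1..l}" for j
  proof -
    have a: "p j \<ge> 0" "p (-j) \<ge> 0" using pn j by auto
    have e: "out_dist (biso p) P j = (1 + xv P)/2 * p j + (1 - xv P)/2 * p (-j)"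
       "out_dist (biso p) Q j = (1 + xv Q)/2 * p j + (1 - xv Q)/2 * p (-j)"
       "out_dist (biso p) P (-j) = (1 + xv P)/2 * p (-j) + (1 - xv P)/2 * p j"
       "out_dist (biso p) Q (-j) = (1 + xv Q)/2 * p (-j) + (1 - xv Q)/2 * p j"
      by (simp_all add: out_biso dist2_F[OF P] dist2_T[OF P] dist2_F[OF Q] dist2_T[OF Q])
    show ?thesis using pair_KL2[OF a e] unfolding wj_def cj_def by simp
  qed
  show ?thesis unfolding KL_def sum_sym[OF l] f0 using fj by simp
qed

lemma KL_BSC:
  assumes q: "0 \<le> q" "q \<le> 1" and P: "is_dist2 P" and Q: "is_dist2 Q"
  shows "KL UNIV (out_dist (BSC q) P) (out_dist (BSC q) Q) = dd ((1 - 2*q) * xv P) ((1 - 2*q) * xv Q)"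
proof -
  have a: "1 - q \<ge> 0" "q \<ge> 0" using q by auto
  have e: "out_dist (BSC q) P False = (1 + xv P)/2 * (1 - q) + (1 - xv P)/2 * q"
       "out_dist (BSC q) Q False = (1 + xv Q)/2 * (1 - q) + (1 - xv Q)/2 * q"
       "out_dist (BSC q) P True = (1 + xv P)/2 * q + (1 - xv P)/2 * (1 - q)"
       "out_dist (BSC q) Q True = (1 + xv Q)/2 * q + (1 - xv Q)/2 * (1 - q)"
    by (simp_all add: out_dist_def UNIV_bool BSC_def dist2_F[OF P] dist2_T[OF P] dist2_F[OF Q] dist2_T[OF Q])
  have "KL UNIV (out_dist (BSC q) P) (out_dist (BSC q) Q) = (1 - q + q) * dd ((1 - q - q) / (1 - q + q) * xv P) ((1 - q - q) / (1 - q + q) * xv Q)"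
    using pair_KL2[OF a e] unfolding KL_def UNIV_bool by simp
  then show ?thesis by simp
qed

lemma KL_BEC:
  assumes e: "0 \<le> e" "e \<le> 1" and P: "is_dist2 P" and Q: "is_dist2 Q"
  shows "KL BEC_out (out_dist (BEC e) P) (out_dist (BEC e) Q) = (1 - e) * dd (xv P) (xv Q)"
proof -
  have a: "1 - e \<ge> 0" "(0::real) \<ge> 0" using e by auto
  have N: "out_dist (BEC e) P None = e" "out_dist (BEC e) Q None = e"
    using P Q unfolding out_dist_def BEC_def UNIV_bool is_dist2_def by (auto simp: distrib_right[symmetric])
  have e2: "out_dist (BEC e) P (Some False) = (1 + xv P)/2 * (1 - e) + (1 - xv P)/2 * 0"
       "out_dist (BEC e) Q (Some False) = (1 + xv Q)/2 * (1 - e) + (1 - xv Q)/2 * 0"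
       "out_dist (BEC e) P (Some True) = (1 + xv P)/2 * 0 + (1 - xv P)/2 * (1 - e)"
       "out_dist (BEC e) Q (Some True) = (1 + xv Q)/2 * 0 + (1 - xv Q)/2 * (1 - e)"
    by (simp_all add: out_dist_def UNIV_bool BEC_def dist2_F[OF P] dist2_T[OF P] dist2_F[OF Q] dist2_T[OF Q])
  have "KL BEC_out (out_dist (BEC e) P) (out_dist (BEC e) Q) =
     (1 - e + 0) * dd ((1 - e - 0) / (1 - e + 0) * xv P) ((1 - e - 0) / (1 - e + 0) * xv Q)"
    using pair_KL2[OF a e2] unfolding KL_def BEC_out_def by (simp add: N)
  also have "\<dots> = (1 - e) * dd (xv P) (xv Q)"
    by (cases "e = 1") auto
  finally show ?thesis .
qed



definition PUf :: "(nat \<Rightarrow> bool \<Rightarrow> real) \<Rightarrow> nat \<Rightarrow> real" where "PUf PUX u = (\<Sum>x\<in>UNIV. PUX u x)"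
definition Pc :: "(nat \<Rightarrow> bool \<Rightarrow> real) \<Rightarrow> nat \<Rightarrow> bool \<Rightarrow> real" where "Pc PUX u = (\<lambda>x. PUX u x / PUf PUX u)"
definition PXf :: "nat \<Rightarrow> (nat \<Rightarrow> bool \<Rightarrow> real) \<Rightarrow> bool \<Rightarrow> real" where "PXf k PUX = (\<lambda>x. \<Sum>u<k. PUX u x)"

lemma MI_decomp:
  assumes J: "is_joint k PUX"
  shows "mutual_info ch Y k PUX = (\<Sum>u<k. PUf PUX u * KL Y (out_dist ch (Pc PUX u)) (out_dist ch (PXf k PUX)))"
proof -
  have nn: "\<And>u x. PUX u x \<ge> 0" using J unfolding is_joint_def by blast
  have PY: "(\<Sum>u<k. \<Sum>x\<in>UNIV. PUX u x * ch x y) = out_dist ch (PXf k PUX) y" for y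
    unfolding out_dist_def PXf_def sum_distrib_right by (rule sum.swap)
  have T: "(\<Sum>y\<in>Y. if (\<Sum>x\<in>UNIV. PUX u x * ch x y) = 0 then 0
        else (\<Sum>x\<in>UNIV. PUX u x * ch x y) * ln ((\<Sum>x\<in>UNIV. PUX u x * ch x y) / (PUf PUX u * out_dist ch (PXf k PUX) y)))
      = PUf PUX u * KL Y (out_dist ch (Pc PUX u)) (out_dist ch (PXf k PUX))" for u
  proof (cases "PUf PUX u = 0")
    case True
    then have "PUX u False + PUX u True = 0" unfolding PUf_def UNIV_bool by simp
    then have "PUX u False = 0" "PUX u True = 0" using nn[of u False] nn[of u True] by linarith+
    then have "\<And>x. PUX u x = 0" by (metis (full_types))
    then show ?thesis using True by simp
  next
    case False
    let ?pi = "PUf PUX u"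
    have e: "(\<Sum>x\<in>UNIV. PUX u x * ch x y) = ?pi * out_dist ch (Pc PUX u) y" for y
      unfolding out_dist_def Pc_def sum_distrib_left using False by (simp add: field_simps)
    have t: "(if ?pi * o1 = 0 then 0 else ?pi * o1 * ln (?pi * o1 / (?pi * q1)))
        = ?pi * (if o1 = 0 then 0 else o1 * ln (o1 / q1))" for o1 q1 :: real
      using False by simp
    show ?thesis unfolding e t KL_def sum_distrib_left ..
  qed
  show ?thesis unfolding mutual_info_def Let_def PY
    unfolding PUf_def[symmetric] T ..
qed



definition thb :: "int \<Rightarrow> (int \<Rightarrow> real) \<Rightarrow> real" where
  "thb l p = (\<Sum>j\<in>{1..l}. wj p j * (cj p j)^2)"

lemma biso_facts:
  assumes bp: "is_biso_param l p"
  shows "l \<ge> 1" "\<And>j. j \<in> {1..l} \<Longrightarrow> wj p j \<ge> 0" "\<And>j. \<bar>cj p j\<bar> \<le> 1"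
    "(\<Sum>j\<in>{1..l}. wj p j) \<le> 1"
proof -
  show l: "l \<ge> 1" using bp unfolding is_biso_param_def by simp
  have pn: "\<And>y. y \<in> {-l..l} \<Longrightarrow> p y \<ge> 0" using bp unfolding is_biso_param_def by blast
  have pz: "\<And>y. y \<notin> {-l..l} \<Longrightarrow> p y = 0" using bp unfolding is_biso_param_def by blast
  have pa: "p y \<ge> 0" for y using pn pz by (cases "y \<in> {-l..l}") auto
  show "\<And>j. j \<in> {1..l} \<Longrightarrow> wj p j \<ge> 0" unfolding wj_def using pa by simp
  show "\<bar>cj p j\<bar> \<le> 1" for j
  proof (cases "p j + p (-j) = 0")
    case True then show ?thesis unfolding cj_def by simp
  next
    case False
    then have pos: "p j + p (-j) > 0" using pa[of j] pa[of "-j"] by linarith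
    have "\<bar>p j - p (-j)\<bar> \<le> p j + p (-j)" using pa[of j] pa[of "-j"] by linarith
    then have "\<bar>p j - p (-j)\<bar> / (p j + p (-j)) \<le> 1" using pos by (simp add: divide_le_eq_1_pos)
    moreover have "\<bar>(p j - p (-j)) / (p j + p (-j))\<bar> = \<bar>p j - p (-j)\<bar> / (p j + p (-j))"
      using pos by (simp add: abs_divide)
    ultimately show ?thesis unfolding cj_def by linarith
  qed
  have "1 = (\<Sum>y\<in>{-l..l}. p y)" using bp unfolding is_biso_param_def by simp
  also have "\<dots> = p 0 + (\<Sum>j\<in>{1..l}. wj p j)" using sum_sym[of l p] l unfolding wj_def by simp
  finally show "(\<Sum>j\<in>{1..l}. wj p j) \<le> 1" using pa[of 0] by linarith
qed

lemma thb_le1: assumes bp: "is_biso_param l p" shows "thb l p \<le> 1" "thb l p \<ge> 0"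
proof -
  have "thb l p \<le> (\<Sum>j\<in>{1..l}. wj p j)" unfolding thb_def
  proof (rule sum_mono)
    fix j assume j: "j \<in> {1..l}"
    have "(cj p j)^2 \<le> 1" using biso_facts(3)[OF bp, of j] by (simp only: abs_square_le_1)
    then show "wj p j * (cj p j)^2 \<le> wj p j" using biso_facts(2)[OF bp j] by (simp add: mult_left_le)
  qed
  then show "thb l p \<le> 1" using biso_facts(4)[OF bp] by linarith
  show "thb l p \<ge> 0" unfolding thb_def by (intro sum_nonneg mult_nonneg_nonneg) (auto simp: biso_facts(2)[OF bp])
qed

definition KLWs :: "int \<Rightarrow> (int \<Rightarrow> real) \<Rightarrow> real \<Rightarrow> real \<Rightarrow> real" where
  "KLWs l p x y = (\<Sum>j\<in>{1..l}. wj p j * dd (cj p j * x) (cj p j * y))"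

lemma KLWs_sums:
  assumes bp: "is_biso_param l p" and x: "\<bar>x\<bar> \<le> 1" and y: "\<bar>y\<bar> < 1"
  shows "(\<lambda>m. (\<Sum>j\<in>{1..l}. wj p j * ((cj p j)^2)^(m+1)) * aa m x y) sums KLWs l p x y"
proof -
  have "(\<lambda>m. \<Sum>j\<in>{1..l}. wj p j * (((cj p j)^2)^(m+1) * aa m x y)) sums KLWs l p x y"
    unfolding KLWs_def
    by (intro sums_sum sums_mult dd_scaled_sums x y biso_facts(3)[OF bp])
  then show ?thesis by (simp add: sum_distrib_right mult.assoc)
qed

lemma KLWs_nonneg:
  assumes bp: "is_biso_param l p" and x: "\<bar>x\<bar> \<le> 1" and y: "\<bar>y\<bar> < 1"
  shows "KLWs l p x y \<ge> 0"
proof -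
  have "\<And>m. 0 \<le> (\<Sum>j\<in>{1..l}. wj p j * ((cj p j)^2)^(m+1)) * aa m x y"
    using biso_facts(2)[OF bp] aa_nonneg by (intro mult_nonneg_nonneg sum_nonneg) auto
  then show ?thesis using sums_le[OF _ sums_zero KLWs_sums[OF bp x y]] by auto
qed

lemma SDPI:
  assumes bp: "is_biso_param l p" and x: "\<bar>x\<bar> \<le> 1" and y: "\<bar>y\<bar> < 1"
  shows "KLWs l p x y \<le> thb l p * dd x y"
proof -
  have s2: "(\<lambda>m. thb l p * aa m x y) sums (thb l p * dd x y)"
    by (intro sums_mult dd_sums x y)
  have "(\<Sum>j\<in>{1..l}. wj p j * ((cj p j)^2)^(m+1)) * aa m x y \<le> thb l p * aa m x y" for m
  proof (rule mult_right_mono[OF _ aa_nonneg])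
    show "(\<Sum>j\<in>{1..l}. wj p j * ((cj p j)^2)^(m+1)) \<le> thb l p" unfolding thb_def
    proof (rule sum_mono)
      fix j assume j: "j \<in> {1..l}"
      have c1: "(cj p j)^2 \<le> 1" using biso_facts(3)[OF bp, of j] by (simp add: abs_square_le_1)
      have "((cj p j)^2)^(m+1) \<le> (cj p j)^2"
        using c1 by (simp add: power_le_one mult_left_le)
      then show "wj p j * ((cj p j)^2)^(m+1) \<le> wj p j * (cj p j)^2"
        using biso_facts(2)[OF bp j] by (simp add: mult_left_mono)
    qed
  qed
  then show ?thesis using sums_le[OF _ KLWs_sums[OF bp x y] s2] by blast
qed

lemma lower:
  assumes bp: "is_biso_param l p" and x: "\<bar>x\<bar> \<le> 1" and y: "\<bar>y\<bar> < 1"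
    and e0: "0 \<le> e" and e1: "e \<le> thb l p"
  shows "dd (sqrt e * x) (sqrt e * y) \<le> KLWs l p x y"
proof -
  have "e \<le> 1" using e1 thb_le1[OF bp] by linarith
  then have c: "\<bar>sqrt e\<bar> \<le> 1" using e0 by simp
  have s1: "(\<lambda>m. e^(m+1) * aa m x y) sums dd (sqrt e * x) (sqrt e * y)"
    using dd_scaled_sums[OF x y c] e0 by simp
  have "e^(m+1) * aa m x y \<le> (\<Sum>j\<in>{1..l}. wj p j * ((cj p j)^2)^(m+1)) * aa m x y" for m
  proof (rule mult_right_mono[OF _ aa_nonneg])
    have "e^(m+1) \<le> (thb l p)^(m+1)" using e0 e1 by (intro power_mono)
    also have "\<dots> \<le> (\<Sum>j\<in>{1..l}. wj p j * ((cj p j)^2)^(m+1))"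
    proof -
      have "(\<Sum>j\<in>{1..l}. wj p j * (cj p j)^2)^(Suc m) \<le> (\<Sum>j\<in>{1..l}. wj p j * ((cj p j)^2)^(Suc m))"
        by (rule jensen_sub) (simp_all add: biso_facts(2,4)[OF bp])
      then show ?thesis unfolding thb_def by simp
    qed
    finally show "e^(m+1) \<le> (\<Sum>j\<in>{1..l}. wj p j * ((cj p j)^2)^(m+1))" .
  qed
  then show ?thesis using sums_le[OF _ s1 KLWs_sums[OF bp x y]] by blast
qed



lemma degenerate:
  assumes P: "is_dist2 P" and Q: "is_dist2 Q" and ac: "abs_cont UNIV P Q" and n: "\<not> \<bar>xv Q\<bar> < 1"
  shows "xv P = xv Q"
proof -
  have q: "Q False \<ge> 0" "Q True \<ge> 0" "Q False + Q True = 1" using Q unfolding is_dist2_def by auto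
  have p: "P False \<ge> 0" "P True \<ge> 0" "P False + P True = 1" using P unfolding is_dist2_def by auto
  have "Q True = 0 \<or> Q False = 0" using n q unfolding xv_def by auto
  then show ?thesis
  proof
    assume "Q True = 0"
    then have "P True = 0" using ac unfolding abs_cont_def by blast
    then show ?thesis using p q \<open>Q True = 0\<close> unfolding xv_def by simp
  next
    assume "Q False = 0"
    then have "P False = 0" using ac unfolding abs_cont_def by blast
    then show ?thesis using p q \<open>Q False = 0\<close> unfolding xv_def by simp
  qed
qed

lemma KLWs_same: "KLWs l p z z = 0"
  unfolding KLWs_def dd_same by simp

definition Sset :: "int \<Rightarrow> (int \<Rightarrow> real) \<Rightarrow> real set" where
  "Sset l p = {KL {-l..l} (out_dist (biso p) P) (out_dist (biso p) Q) / KL UNIV P Q | P Q.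
      is_dist2 P \<and> is_dist2 Q \<and> abs_cont UNIV P Q \<and> 0 < KL UNIV P Q}"

lemma eta_eq: "eta_KL (biso p) {-l..l} = Sup (Sset l p)"
  unfolding eta_KL_def Sset_def ..

lemma Sset_elem:
  assumes bp: "is_biso_param l p" and r: "r \<in> Sset l p"
  shows "0 \<le> r" "r \<le> thb l p"
proof -
  obtain P Q where PQ: "is_dist2 P" "is_dist2 Q" "abs_cont UNIV P Q" "0 < KL UNIV P Q"
    and rr: "r = KL {-l..l} (out_dist (biso p) P) (out_dist (biso p) Q) / KL UNIV P Q"
    using r unfolding Sset_def by blast
  have y: "\<bar>xv Q\<bar> < 1"
  proof (rule ccontr)
    assume "\<not> \<bar>xv Q\<bar> < 1"
    then have "xv P = xv Q" using degenerate PQ by blast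
    then have "KL UNIV P Q = 0" using KL_bool[OF PQ(1,2)] dd_same by simp
    then show False using PQ(4) by simp
  qed
  have x: "\<bar>xv P\<bar> \<le> 1" using dist2_xv PQ(1) by blast
  have e: "r = KLWs l p (xv P) (xv Q) / dd (xv P) (xv Q)"
    using rr KL_W[OF bp PQ(1,2)] KL_bool[OF PQ(1,2)] unfolding KLWs_def by simp
  have pos: "dd (xv P) (xv Q) > 0" using PQ(4) KL_bool[OF PQ(1,2)] by simp
  show "0 \<le> r" unfolding e using KLWs_nonneg[OF bp x y] pos by simp
  show "r \<le> thb l p" unfolding e using SDPI[OF bp x y] pos by (simp add: divide_le_eq)
qed

lemma Sset_ne: "Sset l p \<noteq> {}"
proof -
  define P0 where "P0 = (\<lambda>b::bool. if b then 0 else (1::real))"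
  define Q0 where "Q0 = (\<lambda>b::bool. 1/2::real)"
  have "is_dist2 P0" "is_dist2 Q0" unfolding is_dist2_def P0_def Q0_def by auto
  moreover have "abs_cont UNIV P0 Q0" unfolding abs_cont_def Q0_def by auto
  moreover have "KL UNIV P0 Q0 = ln 2" unfolding KL_def UNIV_bool P0_def Q0_def by simp
  moreover have "0 < ln (2::real)" by simp
  ultimately show ?thesis unfolding Sset_def by (smt (verit, best) empty_iff mem_Collect_eq)
qed

lemma eta_props:
  assumes bp: "is_biso_param l p"
  shows "0 \<le> eta_KL (biso p) {-l..l}" "eta_KL (biso p) {-l..l} \<le> thb l p"
    "\<And>r. r \<in> Sset l p \<Longrightarrow> r \<le> eta_KL (biso p) {-l..l}"
proof -
  have bdd: "bdd_above (Sset l p)" using Sset_elem(2)[OF bp] by (auto simp: bdd_above_def)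
  show up: "\<And>r. r \<in> Sset l p \<Longrightarrow> r \<le> eta_KL (biso p) {-l..l}"
    unfolding eta_eq using bdd by (simp add: cSup_upper)
  obtain r0 where "r0 \<in> Sset l p" using Sset_ne by blast
  then show "0 \<le> eta_KL (biso p) {-l..l}" using Sset_elem(1)[OF bp] up by (meson order.trans)
  show "eta_KL (biso p) {-l..l} \<le> thb l p" unfolding eta_eq
    using Sset_ne Sset_elem(2)[OF bp] by (rule cSup_least)
qed

lemma per_u_part1:
  assumes bp: "is_biso_param l p" and P: "is_dist2 P" and Q: "is_dist2 Q" and ac: "abs_cont UNIV P Q"
  shows "KL {-l..l} (out_dist (biso p) P) (out_dist (biso p) Q) \<le> eta_KL (biso p) {-l..l} * KL UNIV P Q"
proof -
  let ?eta = "eta_KL (biso p) {-l..l}"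
  have x: "\<bar>xv P\<bar> \<le> 1" using dist2_xv P by blast
  have L: "KL {-l..l} (out_dist (biso p) P) (out_dist (biso p) Q) = KLWs l p (xv P) (xv Q)"
    using KL_W[OF bp P Q] unfolding KLWs_def by simp
  show ?thesis
  proof (cases "\<bar>xv Q\<bar> < 1")
    case False
    then have "xv P = xv Q" using degenerate P Q ac by blast
    then show ?thesis unfolding L KL_bool[OF P Q] by (simp add: KLWs_same dd_same)
  next
    case y: True
    show ?thesis
    proof (cases "0 < KL UNIV P Q")
      case True
      have "KL {-l..l} (out_dist (biso p) P) (out_dist (biso p) Q) / KL UNIV P Q \<in> Sset l p"
        unfolding Sset_def using P Q ac True by blast
      then have "KL {-l..l} (out_dist (biso p) P) (out_dist (biso p) Q) / KL UNIV P Q \<le> ?eta"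
        by (rule eta_props(3)[OF bp])
      then show ?thesis using True by (simp add: divide_le_eq)
    next
      case False
      have "KL UNIV P Q = 0" using False dd_nonneg[OF x y] KL_bool[OF P Q] by simp
      then have "KLWs l p (xv P) (xv Q) \<le> 0" using SDPI[OF bp x y] KL_bool[OF P Q] by simp
      then show ?thesis unfolding L using \<open>KL UNIV P Q = 0\<close> by simp
    qed
  qed
qed

lemma per_u_part2:
  assumes bp: "is_biso_param l p" and P: "is_dist2 P" and Q: "is_dist2 Q" and ac: "abs_cont UNIV P Q"
  shows "KL UNIV (out_dist (BSC ((1 - sqrt (eta_KL (biso p) {-l..l})) / 2)) P) (out_dist (BSC ((1 - sqrt (eta_KL (biso p) {-l..l})) / 2)) Q)
     \<le> KL {-l..l} (out_dist (biso p) P) (out_dist (biso p) Q)"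
proof -
  let ?eta = "eta_KL (biso p) {-l..l}"
  have e0: "0 \<le> ?eta" and e1: "?eta \<le> thb l p" using eta_props[OF bp] by auto
  have e1': "?eta \<le> 1" using e1 thb_le1[OF bp] by linarith
  have s: "0 \<le> sqrt ?eta" "sqrt ?eta \<le> 1" using e0 e1' by auto
  have q: "0 \<le> (1 - sqrt ?eta) / 2" "(1 - sqrt ?eta) / 2 \<le> 1"
  proof -
    obtain t where t: "t = sqrt ?eta" by blast
    have "0 \<le> (1 - t) / 2" "(1 - t) / 2 \<le> 1" using s unfolding t[symmetric] by auto
    then show "0 \<le> (1 - sqrt ?eta) / 2" "(1 - sqrt ?eta) / 2 \<le> 1" unfolding t .
  qed
  have c: "1 - 2 * ((1 - sqrt ?eta) / 2) = sqrt ?eta" by (simp add: field_simps)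
  have x: "\<bar>xv P\<bar> \<le> 1" using dist2_xv P by blast
  have L: "KL {-l..l} (out_dist (biso p) P) (out_dist (biso p) Q) = KLWs l p (xv P) (xv Q)"
    using KL_W[OF bp P Q] unfolding KLWs_def by simp
  have B: "KL UNIV (out_dist (BSC ((1 - sqrt ?eta) / 2)) P) (out_dist (BSC ((1 - sqrt ?eta) / 2)) Q)
      = dd (sqrt ?eta * xv P) (sqrt ?eta * xv Q)"
    using KL_BSC[OF q P Q] unfolding c .
  show ?thesis
  proof (cases "\<bar>xv Q\<bar> < 1")
    case False
    then have "xv P = xv Q" using degenerate P Q ac by blast
    then show ?thesis unfolding L B by (simp add: KLWs_same dd_same)
  next
    case y: True
    show ?thesis unfolding L B by (rule lower[OF bp x y e0 e1])
  qed
qed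



lemma joint_facts:
  assumes J: "is_joint k PUX"
  shows "is_dist2 (PXf k PUX)" "\<And>u. PUf PUX u \<ge> 0"
    "\<And>u. u < k \<Longrightarrow> PUf PUX u \<noteq> 0 \<Longrightarrow> is_dist2 (Pc PUX u)"
    "\<And>u. u < k \<Longrightarrow> PUf PUX u \<noteq> 0 \<Longrightarrow> abs_cont UNIV (Pc PUX u) (PXf k PUX)"
proof -
  have nn: "\<And>u x. PUX u x \<ge> 0" using J unfolding is_joint_def by blast
  have s1: "(\<Sum>u<k. PUX u False + PUX u True) = 1" using J unfolding is_joint_def UNIV_bool by simp
  show "is_dist2 (PXf k PUX)" unfolding is_dist2_def PXf_def
    using s1 nn by (simp add: sum_nonneg sum.distrib)
  show pu: "\<And>u. PUf PUX u \<ge> 0" unfolding PUf_def using nn by (simp add: sum_nonneg)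
  show "is_dist2 (Pc PUX u)" if "u < k" "PUf PUX u \<noteq> 0" for u
    unfolding is_dist2_def Pc_def using that nn pu[of u]
    by (auto simp: PUf_def UNIV_bool add_divide_distrib[symmetric])
  show "abs_cont UNIV (Pc PUX u) (PXf k PUX)" if "u < k" "PUf PUX u \<noteq> 0" for u
    unfolding abs_cont_def Pc_def PXf_def
  proof (intro ballI impI)
    fix x assume "(\<Sum>u<k. PUX u x) = 0"
    then have "\<forall>v\<in>{..<k}. PUX v x = 0" using sum_nonneg_eq_0_iff[of "{..<k}" "\<lambda>v. PUX v x"] nn by auto
    then show "PUX u x / PUf PUX u = 0" using that by simp
  qed
qed

theorem theorem1:
  fixes l :: int and p :: "int \<Rightarrow> real"
  assumes "is_biso_param l p"
  defines "\<eta> \<equiv> eta_KL (biso p) {-l..l}"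
  shows "less_noisy (BEC (1 - \<eta>)) BEC_out (biso p) {-l..l}
       \<and> less_noisy (biso p) {-l..l} (BSC ((1 - sqrt \<eta>) / 2)) UNIV"
proof
  have bp: "is_biso_param l p" by fact
  have e0: "0 \<le> \<eta>" and e1: "\<eta> \<le> 1" unfolding \<eta>_def using eta_props[OF bp] thb_le1[OF bp] by auto
  show "less_noisy (BEC (1 - \<eta>)) BEC_out (biso p) {-l..l}"
    unfolding less_noisy_def
  proof (intro allI impI)
    fix k PUX assume J: "is_joint k PUX"
    note jf = joint_facts[OF J]
    show "mutual_info (biso p) {-l..l} k PUX \<le> mutual_info (BEC (1 - \<eta>)) BEC_out k PUX"
      unfolding MI_decomp[OF J]
    proof (rule sum_mono)
      fix u assume u: "u \<in> {..<k}"
      show "PUf PUX u * KL {-l..l} (out_dist (biso p) (Pc PUX u)) (out_dist (biso p) (PXf k PUX))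
         \<le> PUf PUX u * KL BEC_out (out_dist (BEC (1 - \<eta>)) (Pc PUX u)) (out_dist (BEC (1 - \<eta>)) (PXf k PUX))"
      proof (cases "PUf PUX u = 0")
        case True then show ?thesis by simp
      next
        case False
        have P: "is_dist2 (Pc PUX u)" and ac: "abs_cont UNIV (Pc PUX u) (PXf k PUX)"
          using jf(3,4) u False by auto
        have eq: "KL BEC_out (out_dist (BEC (1 - \<eta>)) (Pc PUX u)) (out_dist (BEC (1 - \<eta>)) (PXf k PUX))
           = \<eta> * KL UNIV (Pc PUX u) (PXf k PUX)"
          using KL_BEC[of "1 - \<eta>", OF _ _ P jf(1)] e0 e1 KL_bool[OF P jf(1)] by simp
        show ?thesis unfolding eq
          using per_u_part1[OF bp P jf(1) ac] jf(2)[of u] unfolding \<eta>_def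
          by (simp add: mult_left_mono)
      qed
    qed
  qed
  show "less_noisy (biso p) {-l..l} (BSC ((1 - sqrt \<eta>) / 2)) UNIV"
    unfolding less_noisy_def
  proof (intro allI impI)
    fix k PUX assume J: "is_joint k PUX"
    note jf = joint_facts[OF J]
    show "mutual_info (BSC ((1 - sqrt \<eta>) / 2)) UNIV k PUX \<le> mutual_info (biso p) {-l..l} k PUX"
      unfolding MI_decomp[OF J]
    proof (rule sum_mono)
      fix u assume u: "u \<in> {..<k}"
      show "PUf PUX u * KL UNIV (out_dist (BSC ((1 - sqrt \<eta>) / 2)) (Pc PUX u)) (out_dist (BSC ((1 - sqrt \<eta>) / 2)) (PXf k PUX))
         \<le> PUf PUX u * KL {-l..l} (out_dist (biso p) (Pc PUX u)) (out_dist (biso p) (PXf k PUX))"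
      proof (cases "PUf PUX u = 0")
        case True then show ?thesis by simp
      next
        case False
        have P: "is_dist2 (Pc PUX u)" and ac: "abs_cont UNIV (Pc PUX u) (PXf k PUX)"
          using jf(3,4) u False by auto
        show ?thesis
          using per_u_part2[OF bp P jf(1) ac] jf(2)[of u] unfolding \<eta>_def
          by (simp add: mult_left_mono)
      qed
    qed
  qed
qed


end
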